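(* Let $p\in\{1,2,3\}$, $N,k$ integers with $2k+1\le N$, $\Gamma=[N]^p$, $\Lambda=[2k+1]^p$, and for $i\in\Gamma$ let $\Lambda_i=\{i+j:j\in\{-k,\dots,k\}^p\}$. For each $r=1,\dots,t$ let $(Z^r_i)_{i\in\Gamma}$ have i.i.d. $\mathcal{N}(0,1)$ entries; for all $r,s\in\{1,\dots,t\}$ and $i\ne j$, $Z^r_i$ is independent of $Z^s_j$; and for each $i\in\Gamma$, $(Z^1_i,\dots,Z^t_i)$ is jointly Gaussian with covariance matrix $\Sigma\in\mathbb{R}^{t\times t}$. For $i\in\Gamma$ define $Y_i:=(Z^1_{\Lambda_i\cap\Gamma},\dots,Z^t_{\Lambda_i\cap\Gamma})$, and let $f_i:\mathbb{R}^{|\Lambda_i\cap\Gamma|t}\to\mathbb{R}$ be order-2 pseudo-Lipschitz for all $i\in\Gamma$. Then for all $\epsilon\in(0,1)$ there exist $K,\kappa>0$ such that $$P\Big(\Big|\frac{1}{|\Gamma|}\sum_{i\in\Gamma}\big(f_i(Y_i)-\mathbb{E}[f_i(Y_i)]\big)\Big|\ge\epsilon\Big)\le Ke^{-\kappa|\Gamma|\epsilon^2}.$$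
   Context: $[m]=\{1,\dots,m\}$. For an array $Z=(Z_i)_{i\in\Gamma}$ and $S\subset\Gamma$, $Z_S=(Z_i)_{i\in S}$. A function $g$ is order-2 pseudo-Lipschitz with constant $L$ if $|g(x)-g(y)|\le L(1+\|x\|+\|y\|)\|x-y\|$ for all $x,y$. *)

theory Defs
  imports "HOL-Probability.Probability"
begin

definition grid :: "nat \<Rightarrow> nat \<Rightarrow> int list set" where
  "grid p N = {i. length i = p \<and> (\<forall>x\<in>set i. 1 \<le> x \<and> x \<le> int N)}"

definition window :: "nat \<Rightarrow> nat \<Rightarrow> nat \<Rightarrow> int list \<Rightarrow> int list set" where
  "window p N k i = {j \<in> grid p N. \<forall>d<p. \<bar>j ! d - i ! d\<bar> \<le> int k}"

definition norm_on :: "'b set \<Rightarrow> ('b \<Rightarrow> real) \<Rightarrow> real" where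
  "norm_on S x = sqrt (\<Sum>a\<in>S. (x a)\<^sup>2)"

text \<open>f is a function of the coordinates in S (i.e. on R^S), order-2 pseudo-Lipschitz with constant L.\<close>
definition pseudo_lipschitz2_on :: "'b set \<Rightarrow> real \<Rightarrow> (('b \<Rightarrow> real) \<Rightarrow> real) \<Rightarrow> bool" where
  "pseudo_lipschitz2_on S L f \<longleftrightarrow>
     (\<forall>x y. \<bar>f x - f y\<bar> \<le> L * (1 + norm_on S x + norm_on S y) * norm_on S (\<lambda>a. x a - y a))"

definition gaussian_rv :: "'a measure \<Rightarrow> ('a \<Rightarrow> real) \<Rightarrow> real \<Rightarrow> real \<Rightarrow> bool" where
  "gaussian_rv M X m v \<longleftrightarrow> X \<in> borel_measurable M \<and>
     (if v = 0 then (AE \<omega> in M. X \<omega> = m) else distributed M lborel X (normal_density m (sqrt v)))"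

text \<open>Z r i \<omega> = Z^r_i(\<omega>) for r in 1..t, i in Gamma: each entry N(0,1); for each site i
  the vector (Z^1_i,...,Z^t_i) is jointly Gaussian with mean 0 and covariance Sigma
  (every linear combination is Gaussian with variance c^T Sigma c); the site vectors
  are mutually independent over i in Gamma.\<close>
definition gaussian_field ::
  "nat \<Rightarrow> nat \<Rightarrow> nat \<Rightarrow> (nat \<Rightarrow> nat \<Rightarrow> real) \<Rightarrow> 'a measure \<Rightarrow> (nat \<Rightarrow> int list \<Rightarrow> 'a \<Rightarrow> real) \<Rightarrow> bool" where
  "gaussian_field p N t \<Sigma> M Z \<longleftrightarrow>
     (\<forall>r s. \<Sigma> r s = \<Sigma> s r) \<and>
     (\<forall>r\<in>{1..t}. \<forall>i\<in>grid p N. Z r i \<in> borel_measurable M \<and>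
          distributed M lborel (Z r i) (normal_density 0 1)) \<and>
     (\<forall>i\<in>grid p N. \<forall>c::nat \<Rightarrow> real.
          gaussian_rv M (\<lambda>\<omega>. \<Sum>r=1..t. c r * Z r i \<omega>) 0 (\<Sum>r=1..t. \<Sum>s=1..t. c r * c s * \<Sigma> r s)) \<and>
     prob_space.indep_vars M (\<lambda>_. PiM {1..t} (\<lambda>_. borel)) (\<lambda>i \<omega>. \<lambda>r\<in>{1..t}. Z r i \<omega>) (grid p N)"

text \<open>Y_i = (Z^1_{Lambda_i \<inter> Gamma}, ..., Z^t_{Lambda_i \<inter> Gamma}), as a vector indexed by
  (Lambda_i \<inter> Gamma) \<times> {1..t} (extended by 0 outside).\<close>
definition obs :: "nat \<Rightarrow> nat \<Rightarrow> nat \<Rightarrow> nat \<Rightarrow> (nat \<Rightarrow> int list \<Rightarrow> 'a \<Rightarrow> real) \<Rightarrow> int list \<Rightarrow> 'a \<Rightarrow> (int list \<times> nat \<Rightarrow> real)" where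
  "obs p N k t Z i \<omega> = (\<lambda>(j, r). if j \<in> window p N k i \<and> r \<in> {1..t} then Z r j \<omega> else 0)"

end

theory Submission
  imports Defs
begin


lemma nd_exp_eq: "normal_density 0 1 x * exp (x\<^sup>2 / 4) = sqrt 2 * normal_density 0 (sqrt 2) x"
proof -
  have e: "exp (- x\<^sup>2 / 2) * exp (x\<^sup>2 / 4) = exp (- x\<^sup>2 / 4)"
    by (simp add: exp_add[symmetric])
  have s: "sqrt (pi * 4) = sqrt 2 * sqrt (pi * 2)"
    by (simp add: real_sqrt_mult[symmetric] mult_ac)
  show ?thesis unfolding normal_density_def
    using e by (simp add: s field_simps)
qed

lemma gauss_exp_sq:
  assumes "distributed M lborel Z (normal_density 0 1)"
  shows "(\<integral>\<^sup>+\<omega>. ennreal (exp ((Z \<omega>)\<^sup>2 / 4)) \<partial>M) = ennreal (sqrt 2)"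
proof -
  have "(\<integral>\<^sup>+\<omega>. ennreal (exp ((Z \<omega>)\<^sup>2 / 4)) \<partial>M)
      = (\<integral>\<^sup>+x. ennreal (normal_density 0 1 x) * ennreal (exp (x\<^sup>2 / 4)) \<partial>lborel)"
    using distributed_nn_integral[OF assms, of "\<lambda>x. ennreal (exp (x\<^sup>2 / 4))"] by simp
  also have "\<dots> = (\<integral>\<^sup>+x. ennreal (sqrt 2) * ennreal (normal_density 0 (sqrt 2) x) \<partial>lborel)"
    by (intro nn_integral_cong) (simp add: ennreal_mult[symmetric] nd_exp_eq)
  also have "\<dots> = ennreal (sqrt 2) * (\<integral>\<^sup>+x. ennreal (normal_density 0 (sqrt 2) x) \<partial>lborel)"
    by (simp add: nn_integral_cmult)
  also have "(\<integral>\<^sup>+x. ennreal (normal_density 0 (sqrt 2) x) \<partial>lborel) = 1"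
    by (subst nn_integral_eq_integral) auto
  finally show ?thesis by simp
qed


lemma exp_sum_le_sum_exp:
  fixes y :: "'b \<Rightarrow> real" and s :: real
  assumes "finite S" "S \<noteq> {}" "\<And>a. a \<in> S \<Longrightarrow> y a \<ge> 0" "s \<ge> 0" "s * card S \<le> 1/4"
  shows "exp (s * (\<Sum>a\<in>S. y a)) \<le> (\<Sum>a\<in>S. exp (y a / 4))"
proof -
  have "Max (y ` S) \<in> y ` S" by (rule Max_in) (use assms in auto)
  then obtain a0 where a0S: "a0 \<in> S" and a0M: "y a0 = Max (y ` S)" by (metis imageE)
  have a0: "a0 \<in> S" "\<And>a. a \<in> S \<Longrightarrow> y a \<le> y a0"
    using a0S by (auto simp: a0M intro!: Max_ge assms(1))
  have "(\<Sum>a\<in>S. y a) \<le> (\<Sum>a\<in>S. y a0)" by (intro sum_mono a0(2))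
  also have "\<dots> = card S * y a0" by simp
  finally have "s * (\<Sum>a\<in>S. y a) \<le> s * (card S * y a0)"
    using assms(4) by (intro mult_left_mono) auto
  also have "\<dots> = (s * card S) * y a0" by simp
  also have "\<dots> \<le> 1/4 * y a0"
    using assms(3)[OF a0(1)] assms(5) by (intro mult_right_mono) auto
  finally have "exp (s * (\<Sum>a\<in>S. y a)) \<le> exp (y a0 / 4)" by simp
  also have "\<dots> \<le> (\<Sum>a\<in>S. exp (y a / 4))"
    by (rule member_le_sum) (use a0 assms in auto)
  finally show ?thesis .
qed

lemma gauss_block:
  fixes Zf :: "'b \<Rightarrow> 'a \<Rightarrow> real" and s :: real
  assumes "finite S" "S \<noteq> {}" "s \<ge> 0" "s * card S \<le> 1/4"
    and "\<And>a. a \<in> S \<Longrightarrow> Zf a \<in> borel_measurable M"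
    and "\<And>a. a \<in> S \<Longrightarrow> distributed M lborel (Zf a) (normal_density 0 1)"
  shows "(\<integral>\<^sup>+\<omega>. ennreal (exp (s * (\<Sum>a\<in>S. (Zf a \<omega>)\<^sup>2))) \<partial>M) \<le> ennreal (card S * sqrt 2)"
proof -
  have "(\<integral>\<^sup>+\<omega>. ennreal (exp (s * (\<Sum>a\<in>S. (Zf a \<omega>)\<^sup>2))) \<partial>M)
     \<le> (\<integral>\<^sup>+\<omega>. (\<Sum>a\<in>S. ennreal (exp ((Zf a \<omega>)\<^sup>2 / 4))) \<partial>M)"
    by (intro nn_integral_mono)
       (auto simp: sum_ennreal intro!: ennreal_leI exp_sum_le_sum_exp[OF assms(1,2) _ assms(3,4)])
  also have "\<dots> = (\<Sum>a\<in>S. (\<integral>\<^sup>+\<omega>. ennreal (exp ((Zf a \<omega>)\<^sup>2 / 4)) \<partial>M))"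
    by (intro nn_integral_sum) (use assms(5) in auto)
  also have "\<dots> = (\<Sum>a\<in>S. ennreal (sqrt 2))"
    by (intro sum.cong refl gauss_exp_sq assms(6))
  also have "\<dots> = ennreal (card S * sqrt 2)"
    by (simp add: ennreal_of_nat_eq_real_of_nat ennreal_mult)
  finally show ?thesis .
qed


lemma exp_quad_bound:
  fixes x l \<nu> :: real
  assumes "\<nu> > 0" "\<bar>l\<bar> \<le> \<nu>"
  shows "exp (l * x) \<le> 1 + l * x + l\<^sup>2 * (exp (2 * \<nu> * \<bar>x\<bar>) / \<nu>\<^sup>2)"
proof -
  obtain t where t: "\<bar>t\<bar> \<le> \<bar>l * x\<bar>"
    "exp (l * x) = (\<Sum>m<2. (l * x) ^ m / fact m) + exp t / fact 2 * (l * x) ^ 2"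
    using Maclaurin_exp_le[of "l * x" 2] by blast
  have e1: "exp (l * x) = 1 + l * x + exp t / 2 * (l * x)\<^sup>2"
    using t(2) by (simp add: numeral_2_eq_2)
  have "exp t \<le> exp (\<bar>l\<bar> * \<bar>x\<bar>)" using t(1) by (simp add: abs_mult)
  also have "\<dots> \<le> exp (\<nu> * \<bar>x\<bar>)" using assms by (simp add: mult_right_mono)
  finally have et: "exp t \<le> exp (\<nu> * \<bar>x\<bar>)" .
  have q: "(\<nu> * \<bar>x\<bar>)\<^sup>2 / 2 \<le> exp (\<nu> * \<bar>x\<bar>)"
  proof -
    have "0 \<le> \<nu> * \<bar>x\<bar>" using assms by auto
    thus ?thesis using exp_lower_Taylor_quadratic[of "\<nu> * \<bar>x\<bar>"] by linarith
  qed
  hence q2: "x\<^sup>2 \<le> 2 * exp (\<nu> * \<bar>x\<bar>) / \<nu>\<^sup>2"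
    using assms by (simp add: power_mult_distrib field_simps)
  have "exp t / 2 * (l * x)\<^sup>2 = l\<^sup>2 * (exp t / 2 * x\<^sup>2)" by (simp add: power_mult_distrib)
  also have "\<dots> \<le> l\<^sup>2 * (exp (\<nu> * \<bar>x\<bar>) / 2 * (2 * exp (\<nu> * \<bar>x\<bar>) / \<nu>\<^sup>2))"
    by (intro mult_left_mono mult_mono divide_right_mono et q2) auto
  also have "exp (\<nu> * \<bar>x\<bar>) / 2 * (2 * exp (\<nu> * \<bar>x\<bar>) / \<nu>\<^sup>2) = exp (2 * \<nu> * \<bar>x\<bar>) / \<nu>\<^sup>2"
    by (simp add: exp_add[symmetric])
  finally show ?thesis using e1 by simp
qed

lemma (in prob_space) nn_bound_integrable:
  fixes f :: "'a \<Rightarrow> real"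
  assumes [measurable]: "f \<in> borel_measurable M" and nn: "\<And>\<omega>. \<omega> \<in> space M \<Longrightarrow> 0 \<le> f \<omega>"
    and b: "(\<integral>\<^sup>+\<omega>. ennreal (f \<omega>) \<partial>M) \<le> ennreal B" and B: "B \<ge> 0"
  shows "integrable M f" "expectation f \<le> B"
proof -
  have "(\<integral>\<^sup>+\<omega>. ennreal (norm (f \<omega>)) \<partial>M) = (\<integral>\<^sup>+\<omega>. ennreal (f \<omega>) \<partial>M)"
    by (intro nn_integral_cong) (simp add: nn)
  also have "\<dots> < \<infinity>" using b by (simp add: le_less_trans)
  finally show i: "integrable M f" by (intro integrableI_bounded) auto
  have "ennreal (expectation f) = (\<integral>\<^sup>+\<omega>. ennreal (f \<omega>) \<partial>M)"
    by (rule nn_integral_eq_integral[symmetric]) (use i nn in auto)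
  also note b
  finally show "expectation f \<le> B" using B by simp
qed

definition site_const :: "real \<Rightarrow> real \<Rightarrow> real \<Rightarrow> real" where
  "site_const L s B = 16 * L\<^sup>2 / s\<^sup>2 * (exp (s / (2 * L) * (2 * L + 2 * L * B / s)) * B)"

lemma site_const_nonneg: "L > 0 \<Longrightarrow> s > 0 \<Longrightarrow> B \<ge> 0 \<Longrightarrow> site_const L s B \<ge> 0"
  unfolding site_const_def by simp

lemma (in prob_space) site_integrable:
  fixes G Q :: "'a \<Rightarrow> real" and L s B :: real
  assumes G[measurable]: "G \<in> borel_measurable M" and Qm[measurable]: "Q \<in> borel_measurable M"
    and Q0: "\<And>\<omega>. \<omega> \<in> space M \<Longrightarrow> Q \<omega> \<ge> 0"
    and Gb: "\<And>\<omega>. \<omega> \<in> space M \<Longrightarrow> \<bar>G \<omega>\<bar> \<le> L + 2 * L * Q \<omega>"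
    and s: "s > 0" and B: "B \<ge> 0"
    and Bb: "(\<integral>\<^sup>+\<omega>. ennreal (exp (s * Q \<omega>)) \<partial>M) \<le> ennreal B"
  shows "integrable M G"
proof -
  have eS: "integrable M (\<lambda>\<omega>. exp (s * Q \<omega>))"
    using nn_bound_integrable[of "\<lambda>\<omega>. exp (s * Q \<omega>)" B] Bb B by auto
  have Qle: "Q \<omega> \<le> exp (s * Q \<omega>) / s" for \<omega>
  proof -
    have "s * Q \<omega> \<le> exp (s * Q \<omega>)" using exp_ge_add_one_self[of "s * Q \<omega>"] by linarith
    thus ?thesis using s by (simp add: field_simps)
  qed
  have iQ: "integrable M Q"
    by (rule Bochner_Integration.integrable_bound[of _ "\<lambda>\<omega>. exp (s * Q \<omega>) / s"])
       (use eS Q0 Qle s in \<open>auto intro!: AE_I2 simp: abs_of_nonneg\<close>)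
  show "integrable M G"
    by (rule Bochner_Integration.integrable_bound[of _ "\<lambda>\<omega>. L + 2 * L * Q \<omega>"])
       (use iQ in \<open>auto intro!: AE_I2 intro: order_trans[OF Gb abs_ge_self]\<close>)
qed

lemma (in prob_space) site_mgf:
  fixes G Q :: "'a \<Rightarrow> real" and L s B l :: real
  assumes G[measurable]: "G \<in> borel_measurable M" and Qm[measurable]: "Q \<in> borel_measurable M"
    and Q0: "\<And>\<omega>. \<omega> \<in> space M \<Longrightarrow> Q \<omega> \<ge> 0"
    and Gb: "\<And>\<omega>. \<omega> \<in> space M \<Longrightarrow> \<bar>G \<omega>\<bar> \<le> L + 2 * L * Q \<omega>"
    and L: "L > 0" and s: "s > 0" and B: "B \<ge> 0"
    and Bb: "(\<integral>\<^sup>+\<omega>. ennreal (exp (s * Q \<omega>)) \<partial>M) \<le> ennreal B"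
    and l: "\<bar>l\<bar> \<le> s / (4 * L)"
  shows "(\<integral>\<^sup>+\<omega>. ennreal (exp (l * (G \<omega> - expectation G))) \<partial>M)
           \<le> ennreal (exp (site_const L s B * l\<^sup>2))"
proof -
  define \<mu> where "\<mu> = s / (2 * L)"
  define c1 where "c1 = 2 * L + 2 * L * B / s"
  define R where "R = exp (\<mu> * c1) * B"
  have \<mu>: "\<mu> > 0" using L s by (simp add: \<mu>_def)
  have \<mu>2L: "\<mu> * (2 * L) = s" using L by (simp add: \<mu>_def)
  have eS: "integrable M (\<lambda>\<omega>. exp (s * Q \<omega>))" "expectation (\<lambda>\<omega>. exp (s * Q \<omega>)) \<le> B"
    using nn_bound_integrable[of "\<lambda>\<omega>. exp (s * Q \<omega>)" B] Bb B by auto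
  have Qle: "Q \<omega> \<le> exp (s * Q \<omega>) / s" for \<omega>
  proof -
    have "s * Q \<omega> \<le> exp (s * Q \<omega>)" using exp_ge_add_one_self[of "s * Q \<omega>"] by linarith
    thus ?thesis using s by (simp add: field_simps)
  qed
  have iQ: "integrable M Q"
    by (rule Bochner_Integration.integrable_bound[of _ "\<lambda>\<omega>. exp (s * Q \<omega>) / s"])
       (use eS Q0 Qle s in \<open>auto intro!: AE_I2 simp: abs_of_nonneg\<close>)
  have EQ: "expectation Q \<le> B / s"
  proof -
    have "expectation Q \<le> expectation (\<lambda>\<omega>. exp (s * Q \<omega>) / s)"
      by (intro integral_mono iQ) (use eS Qle in auto)
    also have "\<dots> = expectation (\<lambda>\<omega>. exp (s * Q \<omega>)) / s" by simp
    also have "\<dots> \<le> B / s" using eS s by (simp add: divide_right_mono)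
    finally show ?thesis .
  qed
  have iG: "integrable M G"
    by (rule Bochner_Integration.integrable_bound[of _ "\<lambda>\<omega>. L + 2 * L * Q \<omega>"])
       (use iQ in \<open>auto intro!: AE_I2 intro: order_trans[OF Gb abs_ge_self]\<close>)
  have EG: "\<bar>expectation G\<bar> \<le> L + 2 * L * (B / s)"
  proof -
    have "\<bar>expectation G\<bar> \<le> expectation (\<lambda>\<omega>. \<bar>G \<omega>\<bar>)" by (rule integral_abs_bound)
    also have "\<dots> \<le> expectation (\<lambda>\<omega>. L + 2 * L * Q \<omega>)"
      by (intro integral_mono) (use iG iQ Gb in auto)
    also have "\<dots> = L + 2 * L * expectation Q" using iQ by (simp add: prob_space)
    also have "\<dots> \<le> L + 2 * L * (B / s)" using EQ L by (simp del: times_divide_eq_right)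
    finally show ?thesis .
  qed
  define X where "X \<omega> = G \<omega> - expectation G" for \<omega>
  have Xm[measurable]: "X \<in> borel_measurable M" unfolding X_def by simp
  have iX: "integrable M X" unfolding X_def using iG by simp
  have EX: "expectation X = 0" unfolding X_def using iG by (simp add: prob_space)
  have Xb: "\<bar>X \<omega>\<bar> \<le> c1 + 2 * L * Q \<omega>" if "\<omega> \<in> space M" for \<omega>
    using Gb[OF that] EG unfolding X_def c1_def by (simp add: abs_le_iff)
  have eXb: "exp (\<mu> * \<bar>X \<omega>\<bar>) \<le> exp (\<mu> * c1) * exp (s * Q \<omega>)" if "\<omega> \<in> space M" for \<omega>
  proof -
    have "\<mu> * \<bar>X \<omega>\<bar> \<le> \<mu> * (c1 + 2 * L * Q \<omega>)" using Xb[OF that] \<mu> by (simp add: mult_left_mono)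
    also have "\<dots> = \<mu> * c1 + s * Q \<omega>" using \<mu>2L by (simp add: algebra_simps)
    finally show ?thesis by (simp add: exp_add[symmetric])
  qed
  have ieX: "integrable M (\<lambda>\<omega>. exp (\<mu> * \<bar>X \<omega>\<bar>))"
    by (rule Bochner_Integration.integrable_bound[of _ "\<lambda>\<omega>. exp (\<mu> * c1) * exp (s * Q \<omega>)"])
       (use eS eXb in \<open>auto intro!: AE_I2\<close>)
  have EeX: "expectation (\<lambda>\<omega>. exp (\<mu> * \<bar>X \<omega>\<bar>)) \<le> R"
  proof -
    have "expectation (\<lambda>\<omega>. exp (\<mu> * \<bar>X \<omega>\<bar>)) \<le> expectation (\<lambda>\<omega>. exp (\<mu> * c1) * exp (s * Q \<omega>))"
      by (intro integral_mono) (use eS ieX eXb in auto)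
    also have "\<dots> = exp (\<mu> * c1) * expectation (\<lambda>\<omega>. exp (s * Q \<omega>))" by simp
    also have "\<dots> \<le> R" unfolding R_def using eS by simp
    finally show ?thesis .
  qed
  have l2: "\<bar>l\<bar> \<le> \<mu> / 2" using l by (simp add: \<mu>_def)
  have pt: "exp (l * X \<omega>) \<le> 1 + l * X \<omega> + l\<^sup>2 * (exp (\<mu> * \<bar>X \<omega>\<bar>) / (\<mu> / 2)\<^sup>2)" for \<omega>
    using exp_quad_bound[of "\<mu> / 2" l "X \<omega>"] \<mu> l2 by simp
  have lXb0: "l * X \<omega> \<le> \<mu> * \<bar>X \<omega>\<bar>" for \<omega>
  proof -
    have "l * X \<omega> \<le> \<bar>l\<bar> * \<bar>X \<omega>\<bar>" by (metis abs_ge_self abs_mult)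
    also have "\<dots> \<le> \<mu> * \<bar>X \<omega>\<bar>" using l2 \<mu> by (intro mult_right_mono) auto
    finally show ?thesis .
  qed
  have lXb: "exp (l * X \<omega>) \<le> exp (\<mu> * \<bar>X \<omega>\<bar>)" for \<omega> using lXb0[of \<omega>] by simp
  have ielX: "integrable M (\<lambda>\<omega>. exp (l * X \<omega>))"
    by (rule Bochner_Integration.integrable_bound[OF ieX]) (auto intro!: AE_I2 lXb0)
  have "expectation (\<lambda>\<omega>. exp (l * X \<omega>))
        \<le> expectation (\<lambda>\<omega>. 1 + l * X \<omega> + l\<^sup>2 * (exp (\<mu> * \<bar>X \<omega>\<bar>) / (\<mu> / 2)\<^sup>2))"
    by (intro integral_mono pt) (use ielX iX ieX in auto)
  also have "\<dots> = 1 + l * expectation X + l\<^sup>2 * (expectation (\<lambda>\<omega>. exp (\<mu> * \<bar>X \<omega>\<bar>)) / (\<mu> / 2)\<^sup>2)"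
    using iX ieX by (simp add: prob_space)
  also have "\<dots> \<le> 1 + l\<^sup>2 * (R / (\<mu> / 2)\<^sup>2)"
    using EX EeX by (simp add: divide_right_mono mult_left_mono)
  also have "R / (\<mu> / 2)\<^sup>2 = site_const L s B"
    unfolding site_const_def R_def \<mu>_def c1_def using L s by (simp add: field_simps power2_eq_square)
  also have "1 + l\<^sup>2 * site_const L s B \<le> exp (site_const L s B * l\<^sup>2)"
    using exp_ge_add_one_self[of "site_const L s B * l\<^sup>2"] by (simp add: mult.commute)
  finally have E: "expectation (\<lambda>\<omega>. exp (l * X \<omega>)) \<le> exp (site_const L s B * l\<^sup>2)" .
  have "(\<integral>\<^sup>+\<omega>. ennreal (exp (l * X \<omega>)) \<partial>M) = ennreal (expectation (\<lambda>\<omega>. exp (l * X \<omega>)))"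
    by (rule nn_integral_eq_integral) (use ielX in auto)
  also have "\<dots> \<le> ennreal (exp (site_const L s B * l\<^sup>2))" using E by (rule ennreal_leI)
  finally show ?thesis unfolding X_def .
qed


lemma (in prob_space) class_tail:
  fixes J :: "'i set" and X :: "'i \<Rightarrow> 'a \<Rightarrow> real" and C l a \<sigma> :: real and n :: nat
  assumes fin: "finite J"
    and ind: "indep_vars (\<lambda>_. borel) X J"
    and mgf: "\<And>i l'. i \<in> J \<Longrightarrow> \<bar>l'\<bar> \<le> l \<Longrightarrow> (\<integral>\<^sup>+\<omega>. ennreal (exp (l' * X i \<omega>)) \<partial>M) \<le> ennreal (exp (C * l'\<^sup>2))"
    and C: "C \<ge> 0" and l: "0 < l" and \<sigma>: "\<bar>\<sigma>\<bar> = 1" and n: "card J \<le> n"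
  shows "prob {\<omega> \<in> space M. \<sigma> * (\<Sum>i\<in>J. X i \<omega>) \<ge> a} \<le> exp (- l * a) * exp (n * C * l\<^sup>2)"
proof -
  have Xm[measurable]: "\<And>i. i \<in> J \<Longrightarrow> X i \<in> borel_measurable M"
    using ind by (auto simp: indep_vars_def)
  have Sm[measurable]: "(\<lambda>\<omega>. \<sigma> * (\<Sum>i\<in>J. X i \<omega>)) \<in> borel_measurable M" by measurable
  have "emeasure M {\<omega> \<in> space M. \<sigma> * (\<Sum>i\<in>J. X i \<omega>) \<ge> a}
     \<le> ennreal (exp (- l * a)) * (\<integral>\<^sup>+\<omega>. ennreal (exp (l * (\<sigma> * (\<Sum>i\<in>J. X i \<omega>)))) * indicator (space M) \<omega> \<partial>M)"
    by (rule Chernoff_ineq_nn_integral_ge[OF l]) auto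
  also have "(\<integral>\<^sup>+\<omega>. ennreal (exp (l * (\<sigma> * (\<Sum>i\<in>J. X i \<omega>)))) * indicator (space M) \<omega> \<partial>M)
      = (\<integral>\<^sup>+\<omega>. (\<Prod>i\<in>J. ennreal (exp ((l * \<sigma>) * X i \<omega>))) \<partial>M)"
    by (intro nn_integral_cong)
       (simp add: sum_distrib_left exp_sum fin prod_ennreal mult.assoc)
  also have "\<dots> = (\<Prod>i\<in>J. (\<integral>\<^sup>+\<omega>. ennreal (exp ((l * \<sigma>) * X i \<omega>)) \<partial>M))"
    by (intro indep_vars_nn_integral fin indep_vars_compose2[OF ind]) auto
  also have "\<dots> \<le> (\<Prod>i\<in>J. ennreal (exp (C * l\<^sup>2)))"
  proof (intro prod_mono_ennreal)
    fix i assume "i \<in> J"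
    moreover have "\<bar>l * \<sigma>\<bar> \<le> l" using \<sigma> l by (simp add: abs_mult)
    ultimately have "(\<integral>\<^sup>+\<omega>. ennreal (exp ((l * \<sigma>) * X i \<omega>)) \<partial>M) \<le> ennreal (exp (C * (l * \<sigma>)\<^sup>2))"
      by (rule mgf)
    also have "(l * \<sigma>)\<^sup>2 = l\<^sup>2" using \<sigma> by (metis abs_mult power2_abs mult_1_right)
    finally show "(\<integral>\<^sup>+\<omega>. ennreal (exp ((l * \<sigma>) * X i \<omega>)) \<partial>M) \<le> ennreal (exp (C * l\<^sup>2))" .
  qed
  also have "\<dots> = ennreal (exp (C * l\<^sup>2) ^ card J)" by (simp add: ennreal_power)
  also have "\<dots> \<le> ennreal (exp (C * l\<^sup>2) ^ n)"
    by (intro ennreal_leI power_increasing n) (use C in auto)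
  also have "exp (C * l\<^sup>2) ^ n = exp (n * C * l\<^sup>2)" by (simp add: exp_of_nat_mult[symmetric] mult_ac)
  finally have "emeasure M {\<omega> \<in> space M. \<sigma> * (\<Sum>i\<in>J. X i \<omega>) \<ge> a}
     \<le> ennreal (exp (- l * a) * exp (n * C * l\<^sup>2))"
    by (simp add: ennreal_mult) (meson mult_left_mono zero_le)
  thus ?thesis by (simp add: emeasure_eq_measure)
qed

lemma (in prob_space) class_conc:
  fixes I :: "'i set" and X :: "'i \<Rightarrow> 'a \<Rightarrow> real" and cls :: "'i \<Rightarrow> 'c" and m C l e :: real
  assumes fin: "finite I"
    and ind: "\<And>c. indep_vars (\<lambda>_. borel) X {i\<in>I. cls i = c}"
    and mgf: "\<And>i l'. i \<in> I \<Longrightarrow> \<bar>l'\<bar> \<le> l \<Longrightarrow> (\<integral>\<^sup>+\<omega>. ennreal (exp (l' * X i \<omega>)) \<partial>M) \<le> ennreal (exp (C * l'\<^sup>2))"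
    and C: "C \<ge> 0" and l: "0 < l" and m: "real (card (cls ` I)) \<le> m" "m \<ge> 1" and e: "e > 0"
  shows "prob {\<omega> \<in> space M. real (card I) * e \<le> \<bar>\<Sum>i\<in>I. X i \<omega>\<bar>}
           \<le> 2 * m * (exp (- l * (card I * e / m)) * exp (card I * C * l\<^sup>2))"
proof (cases "I = {}")
  case True
  have "prob {\<omega> \<in> space M. real (card I) * e \<le> \<bar>\<Sum>i\<in>I. X i \<omega>\<bar>} \<le> 1" by simp
  also have "1 \<le> 2 * m * (exp (- l * (card I * e / m)) * exp (card I * C * l\<^sup>2))"
    using True m by simp
  finally show ?thesis .
next
  case False
  define n where "n = card I"
  define a where "a = n * e / m"
  define Cs where "Cs = cls ` I"
  define S where "S c \<omega> = (\<Sum>i\<in>{i\<in>I. cls i = c}. X i \<omega>)" for c \<omega>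
  define A where "A = (\<lambda>(c, \<sigma>::real). {\<omega> \<in> space M. \<sigma> * S c \<omega> \<ge> a})"
  define P where "P = Cs \<times> {1::real, -1}"
  have finCs: "finite Cs" "Cs \<noteq> {}" using fin False by (auto simp: Cs_def)
  have finP: "finite P" using finCs by (simp add: P_def)
  have Xm[measurable]: "\<And>i. i \<in> I \<Longrightarrow> X i \<in> borel_measurable M"
  proof -
    fix i assume "i \<in> I"
    thus "X i \<in> borel_measurable M"
      using ind[of "cls i"] by (auto simp: indep_vars_def)
  qed
  have Sm[measurable]: "\<And>c. S c \<in> borel_measurable M"
    unfolding S_def by (intro borel_measurable_sum) auto
  have sub: "{\<omega> \<in> space M. real (card I) * e \<le> \<bar>\<Sum>i\<in>I. X i \<omega>\<bar>} \<subseteq> (\<Union>p\<in>P. A p)"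
  proof
    fix \<omega> assume \<omega>: "\<omega> \<in> {\<omega> \<in> space M. real (card I) * e \<le> \<bar>\<Sum>i\<in>I. X i \<omega>\<bar>}"
    show "\<omega> \<in> (\<Union>p\<in>P. A p)"
    proof (rule ccontr)
      assume "\<omega> \<notin> (\<Union>p\<in>P. A p)"
      hence lt: "\<bar>S c \<omega>\<bar> < a" if "c \<in> Cs" for c
        using \<omega> that by (auto simp: P_def A_def abs_if split: if_splits)
      have "(\<Sum>i\<in>I. X i \<omega>) = (\<Sum>c\<in>Cs. S c \<omega>)"
        unfolding S_def Cs_def by (rule sum.image_gen[OF fin])
      hence "\<bar>\<Sum>i\<in>I. X i \<omega>\<bar> \<le> (\<Sum>c\<in>Cs. \<bar>S c \<omega>\<bar>)" by (simp add: sum_abs)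
      also have "\<dots> < (\<Sum>c\<in>Cs. a)" by (rule sum_strict_mono[OF finCs lt])
      also have "\<dots> = card Cs * a" by simp
      also have "\<dots> \<le> m * a"
        using m e by (intro mult_right_mono) (auto simp: Cs_def a_def)
      also have "\<dots> = n * e" using m by (simp add: a_def)
      finally show False using \<omega> by (simp add: n_def)
    qed
  qed
  have "prob {\<omega> \<in> space M. real (card I) * e \<le> \<bar>\<Sum>i\<in>I. X i \<omega>\<bar>} \<le> prob (\<Union>p\<in>P. A p)"
    by (rule finite_measure_mono[OF sub]) (use finP in \<open>auto simp: A_def\<close>)
  also have "\<dots> \<le> (\<Sum>p\<in>P. prob (A p))"
    by (rule finite_measure_subadditive_finite[OF finP]) (auto simp: A_def)
  also have "\<dots> \<le> (\<Sum>p\<in>P. exp (- l * a) * exp (n * C * l\<^sup>2))"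
  proof (rule sum_mono)
    fix p assume "p \<in> P"
    then obtain c \<sigma> where p: "p = (c, \<sigma>)" "\<bar>\<sigma>\<bar> = 1" by (auto simp: P_def)
    have "prob {\<omega> \<in> space M. \<sigma> * (\<Sum>i\<in>{i\<in>I. cls i = c}. X i \<omega>) \<ge> a} \<le> exp (- l * a) * exp (n * C * l\<^sup>2)"
      by (rule class_tail[OF _ ind[of c] _ C l p(2)]) (use fin mgf in \<open>auto simp: n_def intro!: card_mono\<close>)
    thus "prob (A p) \<le> exp (- l * a) * exp (n * C * l\<^sup>2)" by (simp add: p A_def S_def)
  qed
  also have "\<dots> = card P * (exp (- l * a) * exp (n * C * l\<^sup>2))" by simp
  also have "card P = 2 * card Cs" using finCs by (simp add: P_def card_cartesian_product)
  also have "real (2 * card Cs) * (exp (- l * a) * exp (n * C * l\<^sup>2))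
      \<le> 2 * m * (exp (- l * a) * exp (n * C * l\<^sup>2))"
    using m by (intro mult_right_mono) (auto simp: Cs_def)
  finally show ?thesis by (simp add: a_def n_def)
qed


lemma norm_on_cont: "finite S \<Longrightarrow> continuous_on UNIV (\<lambda>x::('b::countable \<Rightarrow> real). norm_on S (\<lambda>a. x a - y a))"
  unfolding norm_on_def by (intro continuous_intros) auto

lemma norm_on_cont0: "finite S \<Longrightarrow> continuous_on UNIV (\<lambda>x::('b::countable \<Rightarrow> real). norm_on S x)"
  unfolding norm_on_def by (intro continuous_intros) auto

lemma norm_on_nonneg: "norm_on S x \<ge> 0"
  unfolding norm_on_def by (simp add: sum_nonneg)

lemma pl_continuous:
  fixes f :: "('b::countable \<Rightarrow> real) \<Rightarrow> real"
  assumes fin: "finite S" and pl: "pseudo_lipschitz2_on S L f"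
  shows "continuous_on UNIV f"
proof -
  have "isCont f x" for x
  proof -
    define g where "g y = L * (1 + norm_on S y + norm_on S x) * norm_on S (\<lambda>a. y a - x a)" for y
    have gc: "continuous_on UNIV g" unfolding g_def
      by (intro continuous_intros norm_on_cont norm_on_cont0 fin)
    have gx: "g x = 0" by (simp add: g_def norm_on_def)
    have "(g \<longlongrightarrow> 0) (at x)"
      using gc gx by (metis continuous_on_eq_continuous_at isContD open_UNIV UNIV_I)
    hence ng: "((\<lambda>y. - g y) \<longlongrightarrow> 0) (at x)" using tendsto_minus by fastforce
    have b: "\<bar>f y - f x\<bar> \<le> g y" for y using pl unfolding pseudo_lipschitz2_on_def g_def by blast
    have b1: "\<forall>y. - g y \<le> f y - f x" using b by (metis abs_le_iff minus_le_iff)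
    have b2: "\<forall>y. f y - f x \<le> g y" using b by (metis abs_le_iff)
    have "((\<lambda>y. f y - f x) \<longlongrightarrow> 0) (at x)"
      by (rule tendsto_sandwich[OF always_eventually[OF b1] always_eventually[OF b2] ng \<open>(g \<longlongrightarrow> 0) (at x)\<close>])
    hence "(f \<longlongrightarrow> f x) (at x)" by (simp add: LIM_zero_iff)
    thus ?thesis by (simp add: isCont_def)
  qed
  thus ?thesis by (simp add: continuous_at_imp_continuous_on)
qed

lemma pl_measurable:
  fixes f :: "('b::countable \<Rightarrow> real) \<Rightarrow> real"
  assumes "finite S" "pseudo_lipschitz2_on S L f"
  shows "f \<in> borel_measurable borel"
  by (rule borel_measurable_continuous_onI[OF pl_continuous[OF assms]])


lemma grid_sub: "grid p N \<subseteq> {xs. set xs \<subseteq> {1..int N} \<and> length xs = p}"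
  unfolding grid_def by auto

lemma finite_grid: "finite (grid p N)"
  by (rule finite_subset[OF grid_sub]) (simp add: finite_lists_length_eq)

lemma window_sub: "window p N k i \<subseteq> grid p N"
  unfolding window_def by auto

lemma finite_window: "finite (window p N k i)"
  using finite_subset[OF window_sub finite_grid] .

lemma self_in_window: "i \<in> grid p N \<Longrightarrow> i \<in> window p N k i"
  unfolding window_def by auto

lemma card_window:
  assumes "i \<in> grid p N"
  shows "card (window p N k i) \<le> (2 * k + 1) ^ p"
proof -
  have li: "length i = p" using assms by (simp add: grid_def)
  define V where "V = {v. set v \<subseteq> {- int k..int k} \<and> length v = p}"
  have "window p N k i \<subseteq> (\<lambda>v. map2 (+) v i) ` V"
  proof
    fix j assume j: "j \<in> window p N k i"
    have lj: "length j = p" using j by (simp add: window_def grid_def)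
    define v where "v = map2 (-) j i"
    have lv: "length v = p" using li lj by (simp add: v_def)
    have "set v \<subseteq> {- int k..int k}"
    proof
      fix z assume "z \<in> set v"
      then obtain d where d: "d < p" "z = v ! d" using lv by (auto simp: in_set_conv_nth)
      have "\<bar>j ! d - i ! d\<bar> \<le> int k" using j d by (simp add: window_def)
      moreover have "z = j ! d - i ! d" using d li lj by (simp add: v_def)
      ultimately show "z \<in> {- int k..int k}" by auto
    qed
    hence "v \<in> V" using lv by (simp add: V_def)
    moreover have "j = map2 (+) v i"
      by (rule nth_equalityI) (use li lj in \<open>auto simp: v_def\<close>)
    ultimately show "j \<in> (\<lambda>v. map2 (+) v i) ` V" by blast
  qed
  hence "card (window p N k i) \<le> card ((\<lambda>v. map2 (+) v i) ` V)"
    by (intro card_mono finite_imageI) (auto simp: V_def finite_lists_length_eq)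
  also have "\<dots> \<le> card V" by (rule card_image_le) (auto simp: V_def finite_lists_length_eq)
  also have "card V = card {- int k..int k} ^ p" unfolding V_def by (rule card_lists_length_eq) simp
  also have "card {- int k..int k} = 2 * k + 1" by simp
  finally show ?thesis .
qed

definition cls :: "nat \<Rightarrow> int list \<Rightarrow> int list" where
  "cls k i = map (\<lambda>x. x mod (2 * int k + 1)) i"

lemma card_cls: "card (cls k ` grid p N) \<le> (2 * k + 1) ^ p"
proof -
  define V where "V = {v. set v \<subseteq> {0..2 * int k} \<and> length v = p}"
  have "cls k ` grid p N \<subseteq> V"
  proof
    fix v assume "v \<in> cls k ` grid p N"
    then obtain i where i: "i \<in> grid p N" "v = cls k i" by blast
    have "length v = p" using i by (simp add: cls_def grid_def)
    moreover have "set v \<subseteq> {0..2 * int k}"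
    proof
      fix z assume "z \<in> set v"
      then obtain x where "z = x mod (2 * int k + 1)" using i by (auto simp: cls_def)
      moreover have "x mod (2 * int k + 1) < 2 * int k + 1" by (rule pos_mod_bound) simp
      ultimately show "z \<in> {0..2 * int k}" by auto
    qed
    ultimately show "v \<in> V" by (simp add: V_def)
  qed
  hence "card (cls k ` grid p N) \<le> card V"
    by (intro card_mono) (auto simp: V_def finite_lists_length_eq)
  also have "card V = card {0..2 * int k} ^ p" unfolding V_def by (rule card_lists_length_eq) simp
  also have "card {0..2 * int k} = 2 * k + 1" by simp
  finally show ?thesis .
qed

lemma window_disjoint:
  assumes i: "i \<in> grid p N" and i': "i' \<in> grid p N" and c: "cls k i = cls k i'" and ne: "i \<noteq> i'"
  shows "window p N k i \<inter> window p N k i' = {}"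
proof (rule ccontr)
  assume "window p N k i \<inter> window p N k i' \<noteq> {}"
  then obtain j where j: "j \<in> window p N k i" "j \<in> window p N k i'" by blast
  have li: "length i = p" "length i' = p" using i i' by (auto simp: grid_def)
  obtain d where d: "d < p" "i ! d \<noteq> i' ! d"
    using ne li nth_equalityI by metis
  have "cls k i ! d = cls k i' ! d" using c by simp
  hence "i ! d mod (2 * int k + 1) = i' ! d mod (2 * int k + 1)" using d li by (simp add: cls_def)
  hence dv: "(2 * int k + 1) dvd (i ! d - i' ! d)" by (simp add: mod_eq_dvd_iff)
  have "\<bar>2 * int k + 1\<bar> \<le> \<bar>i ! d - i' ! d\<bar>"
    by (rule dvd_imp_le_int) (use d dv in auto)
  moreover have "\<bar>j ! d - i ! d\<bar> \<le> int k" "\<bar>j ! d - i' ! d\<bar> \<le> int k"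
    using j d by (auto simp: window_def)
  ultimately show False by linarith
qed


lemma gf_Zm:
  assumes "gaussian_field p N t \<Sigma> M Z" "r \<in> {1..t}" "j \<in> grid p N"
  shows "Z r j \<in> borel_measurable M"
  using assms unfolding gaussian_field_def by blast

lemma gf_Zd:
  assumes "gaussian_field p N t \<Sigma> M Z" "r \<in> {1..t}" "j \<in> grid p N"
  shows "distributed M lborel (Z r j) (normal_density 0 1)"
  using assms unfolding gaussian_field_def by blast

lemma obs_measurable:
  assumes gf: "gaussian_field p N t \<Sigma> M Z"
  shows "obs p N k t Z i \<in> borel_measurable M"
proof (rule measurable_coordinatewise_then_product)
  fix a :: "int list \<times> nat"
  obtain j r where a: "a = (j, r)" by (cases a)
  show "(\<lambda>\<omega>. obs p N k t Z i \<omega> a) \<in> borel_measurable M"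
  proof (cases "j \<in> window p N k i \<and> r \<in> {1..t}")
    case True
    hence "Z r j \<in> borel_measurable M" using gf_Zm[OF gf] window_sub by blast
    thus ?thesis using True by (simp add: obs_def a)
  next
    case False
    hence "(\<lambda>\<omega>. obs p N k t Z i \<omega> a) = (\<lambda>_. 0)" by (auto simp: obs_def a)
    thus ?thesis by simp
  qed
qed

lemma f_obs_measurable:
  assumes gf: "gaussian_field p N t \<Sigma> M Z"
    and pl: "pseudo_lipschitz2_on (window p N k i \<times> {1..t}) L f"
  shows "(\<lambda>\<omega>. f (obs p N k t Z i \<omega>)) \<in> borel_measurable M"
  using measurable_compose[OF obs_measurable[OF gf] pl_measurable[OF _ pl]] finite_window
  by (simp add: comp_def)

definition emb :: "int list set \<Rightarrow> nat \<Rightarrow> (int list \<Rightarrow> nat \<Rightarrow> real) \<Rightarrow> (int list \<times> nat \<Rightarrow> real)" where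
  "emb W t u = (\<lambda>(a, r). if a \<in> W \<and> r \<in> {1..t} then u a r else 0)"

lemma emb_measurable:
  "emb W t \<in> measurable (PiM W (\<lambda>_. PiM {1..t} (\<lambda>_. borel))) borel"
proof (rule measurable_coordinatewise_then_product)
  fix x :: "int list \<times> nat"
  obtain a r where x: "x = (a, r)" by (cases x)
  show "(\<lambda>u. emb W t u x) \<in> borel_measurable (PiM W (\<lambda>_. PiM {1..t} (\<lambda>_. borel)))"
  proof (cases "a \<in> W \<and> r \<in> {1..t}")
    case True
    have m1: "(\<lambda>u::int list \<Rightarrow> nat \<Rightarrow> real. u a) \<in> measurable (PiM W (\<lambda>_. PiM {1..t} (\<lambda>_. borel))) (PiM {1..t} (\<lambda>_. borel))"
      using True by (intro measurable_component_singleton) auto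
    have m2: "(\<lambda>v::nat \<Rightarrow> real. v r) \<in> measurable (PiM {1..t} (\<lambda>_. borel)) (borel :: real measure)"
      using True by (intro measurable_component_singleton) auto
    have "(\<lambda>u::int list \<Rightarrow> nat \<Rightarrow> real. u a r) \<in> borel_measurable (PiM W (\<lambda>_. PiM {1..t} (\<lambda>_. borel)))"
      using measurable_compose[OF m1 m2] by simp
    thus ?thesis using True by (simp add: emb_def x)
  next
    case False
    hence "(\<lambda>u. emb W t u x) = (\<lambda>_. 0)" by (auto simp: emb_def x)
    thus ?thesis by simp
  qed
qed

lemma (in prob_space) class_indep:
  assumes gf: "gaussian_field p N t \<Sigma> M Z"
    and pl: "\<And>i. i \<in> grid p N \<Longrightarrow> pseudo_lipschitz2_on (window p N k i \<times> {1..t}) L (f i)"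
  shows "indep_vars (\<lambda>_. borel) (\<lambda>i \<omega>. f i (obs p N k t Z i \<omega>) - E i) {i \<in> grid p N. cls k i = c}"
proof -
  define Jc where "Jc = {i \<in> grid p N. cls k i = c}"
  define V where "V = (\<lambda>i \<omega>. \<lambda>r\<in>{1..t}. Z r i \<omega>)"
  have ind0: "indep_vars (\<lambda>_. PiM {1..t} (\<lambda>_. borel)) V (grid p N)"
    using gf unfolding gaussian_field_def V_def by blast
  have dj: "disjoint_family_on (window p N k) Jc"
    unfolding disjoint_family_on_def Jc_def using window_disjoint by blast
  have ind1: "indep_vars (\<lambda>j. PiM (window p N k j) (\<lambda>_. PiM {1..t} (\<lambda>_. borel)))
      (\<lambda>j \<omega>. restrict (\<lambda>i. V i \<omega>) (window p N k j)) Jc"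
    by (rule indep_vars_restrict[OF ind0 _ dj]) (auto simp: Jc_def window_sub[THEN subsetD])
  define Y where "Y j u = f j (emb (window p N k j) t u) - E j" for j u
  have Ym: "Y j \<in> measurable (PiM (window p N k j) (\<lambda>_. PiM {1..t} (\<lambda>_. borel))) borel" if "j \<in> Jc" for j
  proof -
    have "f j \<in> borel_measurable borel"
      using pl_measurable[OF _ pl] that finite_window by (auto simp: Jc_def)
    hence "(\<lambda>u. f j (emb (window p N k j) t u)) \<in> measurable (PiM (window p N k j) (\<lambda>_. PiM {1..t} (\<lambda>_. borel))) borel"
      using measurable_compose[OF emb_measurable] by blast
    thus ?thesis unfolding Y_def by simp
  qed
  have ind2: "indep_vars (\<lambda>_. borel) (\<lambda>j x. Y j (restrict (\<lambda>i. V i x) (window p N k j))) Jc"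
    by (rule indep_vars_compose2[OF ind1 Ym])
  have eq: "(\<lambda>x. Y j (restrict (\<lambda>i. V i x) (window p N k j))) = (\<lambda>\<omega>. f j (obs p N k t Z j \<omega>) - E j)" for j
  proof -
    have "emb (window p N k j) t (restrict (\<lambda>i. V i x) (window p N k j)) = obs p N k t Z j x" for x
      by (auto simp: emb_def obs_def V_def fun_eq_iff)
    thus ?thesis by (simp add: Y_def)
  qed
  show ?thesis using ind2 unfolding eq Jc_def .
qed


lemma (in prob_space) site_bound:
  fixes f :: "(int list \<times> nat \<Rightarrow> real) \<Rightarrow> real" and L :: real and D :: nat
  assumes gf: "gaussian_field p N t \<Sigma> M Z" and i: "i \<in> grid p N" and t: "t \<ge> 1"
    and pl: "pseudo_lipschitz2_on (window p N k i \<times> {1..t}) L f"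
    and L: "L > 0" and D: "card (window p N k i \<times> {1..t}) \<le> D"
    and l: "\<bar>l\<bar> \<le> (1 / (4 * real D)) / (4 * L)"
  shows "(\<integral>\<^sup>+\<omega>. ennreal (exp (l * (f (obs p N k t Z i \<omega>) - expectation (\<lambda>\<omega>'. f (obs p N k t Z i \<omega>'))))) \<partial>M)
           \<le> ennreal (exp (site_const L (1 / (4 * real D)) (real D * sqrt 2) * l\<^sup>2))"
proof -
  define S where "S = window p N k i \<times> {1..t}"
  define s :: real where "s = 1 / (4 * real D)"
  define B :: real where "B = real D * sqrt 2"
  define Zf where "Zf a = Z (snd a) (fst a)" for a
  define Q where "Q \<omega> = (\<Sum>a\<in>S. (Zf a \<omega>)\<^sup>2)" for \<omega>
  define F where "F \<omega> = f (obs p N k t Z i \<omega>)" for \<omega>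
  define G where "G \<omega> = F \<omega> - f (\<lambda>_. 0)" for \<omega>
  have finS: "finite S" by (simp add: S_def finite_window)
  have S0: "S \<noteq> {}" using i t by (auto simp: S_def intro!: self_in_window)
  have cS: "card S \<ge> 1" using finS S0 by (simp add: Suc_le_eq card_gt_0_iff)
  have D1: "D \<ge> 1" using cS D by (simp add: S_def)
  have s: "s > 0" using D1 by (simp add: s_def)
  have B: "B \<ge> 0" by (simp add: B_def)
  have ZfS: "a \<in> S \<Longrightarrow> fst a \<in> grid p N \<and> snd a \<in> {1..t}" for a
    using window_sub[of p N k i] by (auto simp: S_def)
  have Zfm: "a \<in> S \<Longrightarrow> Zf a \<in> borel_measurable M" for a
    using gf_Zm[OF gf] ZfS by (simp add: Zf_def)
  have Zfd: "a \<in> S \<Longrightarrow> distributed M lborel (Zf a) (normal_density 0 1)" for a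
    using gf_Zd[OF gf] ZfS by (simp add: Zf_def)
  have Qm[measurable]: "Q \<in> borel_measurable M"
    unfolding Q_def by (intro borel_measurable_sum borel_measurable_power Zfm)
  have Fm[measurable]: "F \<in> borel_measurable M"
    unfolding F_def by (rule f_obs_measurable[OF gf pl])
  have Gm[measurable]: "G \<in> borel_measurable M" unfolding G_def by simp
  have Q0: "Q \<omega> \<ge> 0" for \<omega> unfolding Q_def by (simp add: sum_nonneg)
  have nQ: "(norm_on S (obs p N k t Z i \<omega>))\<^sup>2 = Q \<omega>" for \<omega>
  proof -
    have "(\<Sum>a\<in>S. (obs p N k t Z i \<omega> a)\<^sup>2) = Q \<omega>"
      unfolding Q_def by (intro sum.cong refl) (auto simp: S_def obs_def Zf_def)
    thus ?thesis unfolding norm_on_def using Q0[of \<omega>] by (simp add: sum_nonneg)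
  qed
  have Gb: "\<bar>G \<omega>\<bar> \<le> L + 2 * L * Q \<omega>" for \<omega>
  proof -
    define x where "x = obs p N k t Z i \<omega>"
    define nx where "nx = norm_on S x"
    have nx0: "nx \<ge> 0" by (simp add: nx_def norm_on_nonneg)
    have "\<bar>f x - f (\<lambda>_. 0)\<bar> \<le> L * (1 + norm_on S x + norm_on S (\<lambda>_. 0)) * norm_on S (\<lambda>a. x a - 0)"
      using pl unfolding pseudo_lipschitz2_on_def S_def by blast
    also have "\<dots> = L * (1 + nx) * nx" by (simp add: nx_def norm_on_def)
    also have "\<dots> = L * nx + L * nx\<^sup>2" by (simp add: algebra_simps power2_eq_square)
    also have "\<dots> \<le> L * (1 + nx\<^sup>2) + L * nx\<^sup>2"
    proof -
      have h: "0 \<le> nx\<^sup>2 + 1 - 2 * nx" using zero_le_power2[of "nx - 1"] by (simp add: power2_diff)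
      have "nx \<le> 1 + nx\<^sup>2" using nx0 h by linarith
      thus ?thesis using L by (simp add: mult_left_mono)
    qed
    also have "nx\<^sup>2 = Q \<omega>" using nQ by (simp add: nx_def x_def)
    finally show ?thesis by (simp add: G_def F_def x_def algebra_simps)
  qed
  have sD: "s * card S \<le> 1/4"
    using D D1 by (simp add: s_def S_def field_simps)
  have Bb: "(\<integral>\<^sup>+\<omega>. ennreal (exp (s * Q \<omega>)) \<partial>M) \<le> ennreal B"
  proof -
    have "(\<integral>\<^sup>+\<omega>. ennreal (exp (s * Q \<omega>)) \<partial>M) \<le> ennreal (card S * sqrt 2)"
      unfolding Q_def by (rule gauss_block[OF finS S0 _ sD Zfm Zfd]) (use s in auto)
    also have "\<dots> \<le> ennreal B" unfolding B_def using D by (intro ennreal_leI) (simp add: S_def)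
    finally show ?thesis .
  qed
  have iG: "integrable M G" by (rule site_integrable[OF Gm Qm Q0 Gb s B Bb])
  have "F = (\<lambda>\<omega>. G \<omega> + f (\<lambda>_. 0))" by (simp add: G_def fun_eq_iff)
  hence iF: "integrable M F" using iG by simp
  have EG: "expectation G = expectation F - f (\<lambda>_. 0)"
    using iF unfolding G_def by (simp add: prob_space)
  have "(\<integral>\<^sup>+\<omega>. ennreal (exp (l * (G \<omega> - expectation G))) \<partial>M) \<le> ennreal (exp (site_const L s B * l\<^sup>2))"
    by (rule site_mgf[OF Gm Qm Q0 Gb L s B Bb]) (use l in \<open>simp add: s_def\<close>)
  moreover have "G \<omega> - expectation G = F \<omega> - expectation F" for \<omega> by (simp add: EG G_def)
  ultimately have "(\<integral>\<^sup>+\<omega>. ennreal (exp (l * (F \<omega> - expectation F))) \<partial>M) \<le> ennreal (exp (site_const L s B * l\<^sup>2))"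
    by simp
  thus ?thesis unfolding F_def s_def B_def .
qed


lemma final_arith:
  fixes lam Cst e mm n :: real
  assumes "lam > 0" "Cst \<ge> 0" "e > 0" "mm \<ge> 1" "n \<ge> 0" "lam \<le> e / (2 * mm * (Cst + 1))"
  shows "exp (- lam * (n * e / mm)) * exp (n * Cst * lam\<^sup>2) \<le> exp (- (lam / (2 * mm * e)) * n * e\<^sup>2)"
proof -
  have pos: "0 < 2 * mm * (Cst + 1)" using assms by simp
  have a: "lam * (2 * mm * (Cst + 1)) \<le> e" using assms(6) pos_le_divide_eq[OF pos] by blast
  have eq: "Cst * lam * (2 * mm) = lam * (2 * mm * (Cst + 1)) - lam * (2 * mm)" by (simp add: algebra_simps)
  have "lam * (2 * mm) \<ge> 0" using assms by simp
  hence "Cst * lam * (2 * mm) \<le> e" using a eq by linarith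
  hence "Cst * lam \<le> e / (2 * mm)" using assms by (simp add: pos_le_divide_eq)
  hence "(n * lam) * (Cst * lam) \<le> (n * lam) * (e / (2 * mm))"
    using assms by (intro mult_left_mono) auto
  hence h: "n * Cst * lam\<^sup>2 \<le> lam * n * e / (2 * mm)" by (simp add: power2_eq_square mult_ac)
  have "- lam * (n * e / mm) + n * Cst * lam\<^sup>2 \<le> - lam * (n * e / mm) + lam * n * e / (2 * mm)"
    using h by linarith
  also have "\<dots> = - (lam / (2 * mm * e)) * n * e\<^sup>2"
    using assms by (simp add: field_simps power2_eq_square)
  finally show ?thesis by (simp add: exp_add[symmetric])
qed

theorem lemmaC4:
  fixes p k t :: nat and \<Sigma> :: "nat \<Rightarrow> nat \<Rightarrow> real" and L \<epsilon> :: real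
  assumes "p \<in> {1, 2, 3}" and "t \<ge> 1" and "L > 0"
    and "0 < \<epsilon>" and "\<epsilon> < 1"
  shows "\<exists>K \<kappa>::real. K > 0 \<and> \<kappa> > 0 \<and>
    (\<forall>(N::nat) (M::'a measure) Z (f :: int list \<Rightarrow> (int list \<times> nat \<Rightarrow> real) \<Rightarrow> real).
       2 * k + 1 \<le> N \<and> prob_space M \<and> gaussian_field p N t \<Sigma> M Z \<and>
       (\<forall>i\<in>grid p N. pseudo_lipschitz2_on (window p N k i \<times> {1..t}) L (f i)) \<longrightarrow>
       measure M {\<omega> \<in> space M.
          \<bar>(1 / real (card (grid p N))) *
             (\<Sum>i\<in>grid p N. f i (obs p N k t Z i \<omega>)
                 - prob_space.expectation M (\<lambda>\<omega>'. f i (obs p N k t Z i \<omega>')))\<bar> \<ge> \<epsilon>}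
       \<le> K * exp (- \<kappa> * real (card (grid p N)) * \<epsilon>\<^sup>2))"
proof -
  define m :: nat where "m = (2 * k + 1) ^ p"
  define D :: nat where "D = m * t"
  define s :: real where "s = 1 / (4 * real D)"
  define B :: real where "B = real D * sqrt 2"
  define l0 where "l0 = s / (4 * L)"
  define Cst where "Cst = site_const L s B"
  define lam where "lam = min l0 (\<epsilon> / (2 * real m * (Cst + 1)))"
  define K :: real where "K = 2 * real m"
  define \<kappa> where "\<kappa> = lam / (2 * real m * \<epsilon>)"
  have m1: "m \<ge> 1" by (simp add: m_def)
  have D1: "D \<ge> 1" using m1 assms(2) by (simp add: D_def)
  have s0: "s > 0" using D1 by (simp add: s_def)
  have B0: "B \<ge> 0" by (simp add: B_def)
  have C0: "Cst \<ge> 0" unfolding Cst_def by (rule site_const_nonneg[OF assms(3) s0 B0])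
  have l00: "l0 > 0" using s0 assms(3) by (simp add: l0_def)
  have lam0: "lam > 0" using l00 C0 m1 assms(4) by (simp add: lam_def)
  have laml0: "lam \<le> l0" by (simp add: lam_def)
  have lam2: "lam \<le> \<epsilon> / (2 * real m * (Cst + 1))" by (simp add: lam_def)
  have K0: "K > 0" using m1 by (simp add: K_def)
  have \<kappa>0: "\<kappa> > 0" using lam0 m1 assms(4) by (simp add: \<kappa>_def)
  have main: "measure M {\<omega> \<in> space M.
          \<bar>(1 / real (card (grid p N))) *
             (\<Sum>i\<in>grid p N. f i (obs p N k t Z i \<omega>)
                 - prob_space.expectation M (\<lambda>\<omega>'. f i (obs p N k t Z i \<omega>')))\<bar> \<ge> \<epsilon>}
       \<le> K * exp (- \<kappa> * real (card (grid p N)) * \<epsilon>\<^sup>2)"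
    if H: "2 * k + 1 \<le> N" "prob_space M" "gaussian_field p N t \<Sigma> M Z"
       "\<forall>i\<in>grid p N. pseudo_lipschitz2_on (window p N k i \<times> {1..t}) L (f i)"
    for N and M :: "'a measure" and Z f
  proof -
    interpret prob_space M by (rule H(2))
    define I where "I = grid p N"
    define n where "n = card I"
    define X where "X i \<omega> = f i (obs p N k t Z i \<omega>) - expectation (\<lambda>\<omega>'. f i (obs p N k t Z i \<omega>'))" for i \<omega>
    have fin: "finite I" by (simp add: I_def finite_grid)
    have ind: "indep_vars (\<lambda>_. borel) X {i \<in> I. cls k i = c}" for c
      unfolding X_def I_def by (rule class_indep[OF H(3)]) (use H(4) in auto)
    have mgf: "(\<integral>\<^sup>+\<omega>. ennreal (exp (l' * X i \<omega>)) \<partial>M) \<le> ennreal (exp (Cst * l'\<^sup>2))"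
      if "i \<in> I" "\<bar>l'\<bar> \<le> l0" for i l'
    proof -
      have "card (window p N k i \<times> {1..t}) = card (window p N k i) * t"
        by (simp add: card_cartesian_product)
      also have "\<dots> \<le> m * t" unfolding m_def
        using card_window[of i p N k] that(1) by (simp add: I_def)
      finally have cD: "card (window p N k i \<times> {1..t}) \<le> D" by (simp add: D_def)
      have iI: "i \<in> grid p N" using that by (simp add: I_def)
      have pl: "pseudo_lipschitz2_on (window p N k i \<times> {1..t}) L (f i)" using H(4) iI by blast
      have l': "\<bar>l'\<bar> \<le> (1 / (4 * real D)) / (4 * L)" using that(2) by (simp add: l0_def s_def)
      show ?thesis unfolding X_def Cst_def s_def B_def
        using site_bound[OF H(3) iI assms(2) pl assms(3) cD l'] .
    qed
    have cc: "prob {\<omega> \<in> space M. real (card I) * \<epsilon> \<le> \<bar>\<Sum>i\<in>I. X i \<omega>\<bar>}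
           \<le> 2 * real m * (exp (- lam * (card I * \<epsilon> / real m)) * exp (card I * Cst * lam\<^sup>2))"
    proof -
      have "card (cls k ` I) \<le> m" using card_cls[of k p N] by (simp add: I_def m_def)
      hence cm: "real (card (cls k ` I)) \<le> real m" by linarith
      have m1': "real m \<ge> 1" using m1 by simp
      show ?thesis
        by (rule class_conc[OF fin ind _ C0 lam0 cm m1' assms(4)]) (use mgf laml0 in auto)
    qed
    have ar: "exp (- lam * (n * \<epsilon> / real m)) * exp (n * Cst * lam\<^sup>2) \<le> exp (- \<kappa> * n * \<epsilon>\<^sup>2)"
      unfolding \<kappa>_def by (rule final_arith[OF lam0 C0 assms(4) _ _ lam2]) (use m1 in auto)
    show ?thesis
    proof (cases "n = 0")
      case True
      have E: "{\<omega> \<in> space M.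
          \<bar>(1 / real (card (grid p N))) *
             (\<Sum>i\<in>grid p N. f i (obs p N k t Z i \<omega>)
                 - prob_space.expectation M (\<lambda>\<omega>'. f i (obs p N k t Z i \<omega>')))\<bar> \<ge> \<epsilon>} = {}"
        using True assms(4) by (auto simp: n_def I_def)
      show ?thesis unfolding E using K0 by simp
    next
      case False
      have "{\<omega> \<in> space M.
          \<bar>(1 / real (card (grid p N))) *
             (\<Sum>i\<in>grid p N. f i (obs p N k t Z i \<omega>)
                 - prob_space.expectation M (\<lambda>\<omega>'. f i (obs p N k t Z i \<omega>')))\<bar> \<ge> \<epsilon>}
          = {\<omega> \<in> space M. real (card I) * \<epsilon> \<le> \<bar>\<Sum>i\<in>I. X i \<omega>\<bar>}"
        using False by (auto simp: n_def I_def X_def abs_mult field_simps)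
      hence "measure M {\<omega> \<in> space M.
          \<bar>(1 / real (card (grid p N))) *
             (\<Sum>i\<in>grid p N. f i (obs p N k t Z i \<omega>)
                 - prob_space.expectation M (\<lambda>\<omega>'. f i (obs p N k t Z i \<omega>')))\<bar> \<ge> \<epsilon>}
          \<le> 2 * real m * (exp (- lam * (card I * \<epsilon> / real m)) * exp (card I * Cst * lam\<^sup>2))"
        using cc by simp
      also have "\<dots> \<le> 2 * real m * exp (- \<kappa> * n * \<epsilon>\<^sup>2)"
        using ar by (intro mult_left_mono) (auto simp: n_def)
      finally show ?thesis by (simp add: K_def n_def I_def)
    qed
  qed
  show ?thesis
    by (rule exI[of _ K], rule exI[of _ \<kappa>]) (use K0 \<kappa>0 main in blast)
qed


end
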